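(* Let $R$ be a ring and $(P,Q,\psi)$ an $R$-system. (a) The Toeplitz ring $\mathcal{T}_{(P,Q,\psi)}=\bigoplus_{i\in\mathbb{Z}}\mathcal{T}_i$ is semi-saturated. (b) If $(S,T,\sigma,B)$ is any graded covariant representation of $(P,Q,\psi)$, then $B=\bigoplus_{i\in\mathbb{Z}}B_i$ is semi-saturated.
   Context: For additive subsets $X,Y$ of a ring, $XY$ is the additive subgroup generated by products, and $X^n$ similarly. A $\mathbb{Z}$-graded ring $A=\bigoplus_iA_i$ is semi-saturated if $A_n=(A_1)^n$ and $A_{-n}=(A_{-1})^n$ for all $n>0$. An $R$-system is a triple $(P,Q,\psi)$ with $P,Q$ $R$-bimodules and $\psi:P\otimes_RQ\to R$ an $R$-bimodule homomorphism. Put $P^{\otimes0}=Q^{\otimes0}=R$, $Q^{\otimes n}=Q^{\otimes(n-1)}\otimes_RQ$, $P^{\otimes n}=P\otimes_RP^{\otimes(n-1)}$. A covariant representation of $(P,Q,\psi)$ is a tuple $(S,T,\sigma,B)$ with $B$ a ring, $S:P\to B$, $T:Q\to B$ additive maps, $\sigma:R\to B$ a ring homomorphism, with $S(pr)=S(p)\sigma(r)$, $S(rp)=\sigma(r)S(p)$, $T(qr)=T(q)\sigma(r)$, $T(rq)=\sigma(r)T(q)$, $\sigma(\psi(p\otimes q))=S(p)T(q)$; it is graded if $B$ is generated as a ring by $\sigma(R)\cup S(P)\cup T(Q)$ and $B$ carries a $\mathbb{Z}$-grading with $\sigma(R)\subseteq B_0$, $T(Q)\subseteq B_1$, $S(P)\subseteq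 B_{-1}$. The Toeplitz representation $(\iota_P,\iota_Q,\iota_R,\mathcal{T}_{(P,Q,\psi)})$ is the universal covariant representation (every graded covariant representation $(S,T,\sigma,B)$ receives a unique graded ring epimorphism $\eta$ with $\eta\iota_P=S$, $\eta\iota_Q=T$, $\eta\iota_R=\sigma$); its grading is $\mathcal{T}_i$ = additive group generated by elements $\iota_Q^m(q)\iota_P^n(p)$ and $\iota_R(r)\iota_Q^m(q)\iota_P^n(p)$ with $q\in Q^{\otimes m}$, $p\in P^{\otimes n}$, $m-n=i$, where $\iota_Q^m(q_1\otimes\cdots\otimes q_m)=\iota_Q(q_1)\cdots\iota_Q(q_m)$, similarly $\iota_P^n$, and $\iota^0=\iota_R$. *)

theory Defs
  imports Main
begin

text \<open>Rings are associative, not necessarily unital: Isabelle's type class ring.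
  A ring R is represented by a type 'r of class ring, and likewise for the target rings.\<close>

definition bimodule :: "('r::ring \<Rightarrow> 'p::ab_group_add \<Rightarrow> 'p) \<Rightarrow> ('p \<Rightarrow> 'r \<Rightarrow> 'p) \<Rightarrow> bool" where
  "bimodule lact ract \<longleftrightarrow>
     (\<forall>r p p'. lact r (p + p') = lact r p + lact r p') \<and>
     (\<forall>r s p. lact (r + s) p = lact r p + lact s p) \<and>
     (\<forall>r s p. lact (r * s) p = lact r (lact s p)) \<and>
     (\<forall>r p p'. ract (p + p') r = ract p r + ract p' r) \<and>
     (\<forall>r s p. ract p (r + s) = ract p r + ract p s) \<and>
     (\<forall>r s p. ract p (r * s) = ract (ract p r) s) \<and>
     (\<forall>r s p. lact r (ract p s) = ract (lact r p) s)"

text \<open>An R-bimodule homomorphism from the balanced tensor product P \<otimes>_R Q to R is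
  given by (and, by the universal property of the tensor product, the same as) its values
  psi p q = psi(p \<otimes> q) on elementary tensors: a biadditive R-balanced map that is
  left R-linear in p and right R-linear in q.\<close>

definition tensor_bihom ::
  "('r::ring \<Rightarrow> 'p::ab_group_add \<Rightarrow> 'p) \<Rightarrow> ('p \<Rightarrow> 'r \<Rightarrow> 'p) \<Rightarrow>
   ('r \<Rightarrow> 'q::ab_group_add \<Rightarrow> 'q) \<Rightarrow> ('q \<Rightarrow> 'r \<Rightarrow> 'q) \<Rightarrow> ('p \<Rightarrow> 'q \<Rightarrow> 'r) \<Rightarrow> bool" where
  "tensor_bihom lP rP lQ rQ psi \<longleftrightarrow>
     (\<forall>p p' q. psi (p + p') q = psi p q + psi p' q) \<and>
     (\<forall>p q q'. psi p (q + q') = psi p q + psi p q') \<and>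
     (\<forall>p r q. psi (rP p r) q = psi p (lQ r q)) \<and>
     (\<forall>r p q. psi (lP r p) q = r * psi p q) \<and>
     (\<forall>p q r. psi p (rQ q r) = psi p q * r)"

definition R_system ::
  "('r::ring \<Rightarrow> 'p::ab_group_add \<Rightarrow> 'p) \<Rightarrow> ('p \<Rightarrow> 'r \<Rightarrow> 'p) \<Rightarrow>
   ('r \<Rightarrow> 'q::ab_group_add \<Rightarrow> 'q) \<Rightarrow> ('q \<Rightarrow> 'r \<Rightarrow> 'q) \<Rightarrow> ('p \<Rightarrow> 'q \<Rightarrow> 'r) \<Rightarrow> bool" where
  "R_system lP rP lQ rQ psi \<longleftrightarrow>
     bimodule lP rP \<and> bimodule lQ rQ \<and> tensor_bihom lP rP lQ rQ psi"

inductive_set add_span :: "'a::ab_group_add set \<Rightarrow> 'a set" for X where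
  add_span_base: "x \<in> X \<Longrightarrow> x \<in> add_span X"
| add_span_zero: "0 \<in> add_span X"
| add_span_add: "x \<in> add_span X \<Longrightarrow> y \<in> add_span X \<Longrightarrow> x + y \<in> add_span X"
| add_span_neg: "x \<in> add_span X \<Longrightarrow> - x \<in> add_span X"

inductive nprodsp :: "'a::ring set \<Rightarrow> nat \<Rightarrow> 'a \<Rightarrow> bool" for X where
  nprods_one: "x \<in> X \<Longrightarrow> nprodsp X 1 x"
| nprods_step: "nprodsp X n a \<Longrightarrow> x \<in> X \<Longrightarrow> nprodsp X (Suc n) (a * x)"

definition nprods :: "'a::ring set \<Rightarrow> nat \<Rightarrow> 'a set" where
  "nprods X n = {a. nprodsp X n a}"

definition set_power :: "'a::ring set \<Rightarrow> nat \<Rightarrow> 'a set" where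
  "set_power X n = add_span (nprods X n)"

inductive_set ring_span :: "'a::ring set \<Rightarrow> 'a set" for X where
  ring_span_base: "x \<in> X \<Longrightarrow> x \<in> ring_span X"
| ring_span_zero: "0 \<in> ring_span X"
| ring_span_add: "x \<in> ring_span X \<Longrightarrow> y \<in> ring_span X \<Longrightarrow> x + y \<in> ring_span X"
| ring_span_neg: "x \<in> ring_span X \<Longrightarrow> - x \<in> ring_span X"
| ring_span_mult: "x \<in> ring_span X \<Longrightarrow> y \<in> ring_span X \<Longrightarrow> x * y \<in> ring_span X"

text \<open>A Z-grading of the ring (the whole type) 'a: A = \<Oplus>_i A_i.\<close>
definition Z_graded :: "(int \<Rightarrow> 'a::ring set) \<Rightarrow> bool" where
  "Z_graded A \<longleftrightarrow>
     (\<forall>i. 0 \<in> A i \<and> (\<forall>x\<in>A i. \<forall>y\<in>A i. x + y \<in> A i) \<and> (\<forall>x\<in>A i. - x \<in> A i)) \<and>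
     (\<forall>i j. \<forall>x\<in>A i. \<forall>y\<in>A j. x * y \<in> A (i + j)) \<and>
     (\<forall>a. \<exists>f::int \<Rightarrow> 'a. finite {i. f i \<noteq> 0} \<and> (\<forall>i. f i \<in> A i) \<and> a = sum f {i. f i \<noteq> 0}) \<and>
     (\<forall>f::int \<Rightarrow> 'a. finite {i. f i \<noteq> 0} \<and> (\<forall>i. f i \<in> A i) \<and> sum f {i. f i \<noteq> 0} = 0
        \<longrightarrow> (\<forall>i. f i = 0))"

definition semi_saturated :: "(int \<Rightarrow> 'a::ring set) \<Rightarrow> bool" where
  "semi_saturated A \<longleftrightarrow> Z_graded A \<and>
     (\<forall>n::nat. n > 0 \<longrightarrow> A (int n) = set_power (A 1) n \<and> A (- int n) = set_power (A (-1)) n)"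

definition covariant_rep ::
  "('r::ring \<Rightarrow> 'p::ab_group_add \<Rightarrow> 'p) \<Rightarrow> ('p \<Rightarrow> 'r \<Rightarrow> 'p) \<Rightarrow>
   ('r \<Rightarrow> 'q::ab_group_add \<Rightarrow> 'q) \<Rightarrow> ('q \<Rightarrow> 'r \<Rightarrow> 'q) \<Rightarrow> ('p \<Rightarrow> 'q \<Rightarrow> 'r) \<Rightarrow>
   ('p \<Rightarrow> 'b::ring) \<Rightarrow> ('q \<Rightarrow> 'b) \<Rightarrow> ('r \<Rightarrow> 'b) \<Rightarrow> bool" where
  "covariant_rep lP rP lQ rQ psi S T \<sigma> \<longleftrightarrow>
     (\<forall>p p'. S (p + p') = S p + S p') \<and>
     (\<forall>q q'. T (q + q') = T q + T q') \<and>
     (\<forall>r s. \<sigma> (r + s) = \<sigma> r + \<sigma> s) \<and>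
     (\<forall>r s. \<sigma> (r * s) = \<sigma> r * \<sigma> s) \<and>
     (\<forall>p r. S (rP p r) = S p * \<sigma> r) \<and>
     (\<forall>r p. S (lP r p) = \<sigma> r * S p) \<and>
     (\<forall>q r. T (rQ q r) = T q * \<sigma> r) \<and>
     (\<forall>r q. T (lQ r q) = \<sigma> r * T q) \<and>
     (\<forall>p q. \<sigma> (psi p q) = S p * T q)"

text \<open>A graded covariant representation (S,T,\<sigma>,B), with B the whole type 'b and
  the grading B_i = Bg i.\<close>
definition graded_covariant_rep ::
  "('r::ring \<Rightarrow> 'p::ab_group_add \<Rightarrow> 'p) \<Rightarrow> ('p \<Rightarrow> 'r \<Rightarrow> 'p) \<Rightarrow>
   ('r \<Rightarrow> 'q::ab_group_add \<Rightarrow> 'q) \<Rightarrow> ('q \<Rightarrow> 'r \<Rightarrow> 'q) \<Rightarrow> ('p \<Rightarrow> 'q \<Rightarrow> 'r) \<Rightarrow>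
   ('p \<Rightarrow> 'b::ring) \<Rightarrow> ('q \<Rightarrow> 'b) \<Rightarrow> ('r \<Rightarrow> 'b) \<Rightarrow> (int \<Rightarrow> 'b set) \<Rightarrow> bool" where
  "graded_covariant_rep lP rP lQ rQ psi S T \<sigma> Bg \<longleftrightarrow>
     covariant_rep lP rP lQ rQ psi S T \<sigma> \<and>
     ring_span (range \<sigma> \<union> range S \<union> range T) = UNIV \<and>
     Z_graded Bg \<and>
     range \<sigma> \<subseteq> Bg 0 \<and> range T \<subseteq> Bg 1 \<and> range S \<subseteq> Bg (-1)"

text \<open>Images iota^m(Q^{\<otimes>m}) are additively generated by the products
  iota_Q(q_1)...iota_Q(q_m) (for m = 0: iota_R(R)); these generators are used below.\<close>
definition tensor_image :: "('x \<Rightarrow> 'b::ring) \<Rightarrow> ('r \<Rightarrow> 'b) \<Rightarrow> nat \<Rightarrow> 'b set" where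
  "tensor_image \<iota> \<iota>R m = (if m = 0 then range \<iota>R else nprods (range \<iota>) m)"

definition toeplitz_grading ::
  "('p \<Rightarrow> 'b::ring) \<Rightarrow> ('q \<Rightarrow> 'b) \<Rightarrow> ('r \<Rightarrow> 'b) \<Rightarrow> int \<Rightarrow> 'b set" where
  "toeplitz_grading \<iota>P \<iota>Q \<iota>R i = add_span
     ({a * b | a b m n. a \<in> tensor_image \<iota>Q \<iota>R m \<and> b \<in> tensor_image \<iota>P \<iota>R n \<and> int m - int n = i} \<union>
      {\<iota>R r * a * b | r a b m n. a \<in> tensor_image \<iota>Q \<iota>R m \<and> b \<in> tensor_image \<iota>P \<iota>R n \<and> int m - int n = i})"

definition graded_ring_epi :: "('b::ring \<Rightarrow> 'c::ring) \<Rightarrow> (int \<Rightarrow> 'b set) \<Rightarrow> (int \<Rightarrow> 'c set) \<Rightarrow> bool" where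
  "graded_ring_epi \<eta> A B \<longleftrightarrow>
     (\<forall>x y. \<eta> (x + y) = \<eta> x + \<eta> y) \<and> (\<forall>x y. \<eta> (x * y) = \<eta> x * \<eta> y) \<and>
     surj \<eta> \<and> (\<forall>i. \<eta> ` A i \<subseteq> B i)"

definition toeplitz_rep ::
  "'c::ring itself \<Rightarrow>
   ('r::ring \<Rightarrow> 'p::ab_group_add \<Rightarrow> 'p) \<Rightarrow> ('p \<Rightarrow> 'r \<Rightarrow> 'p) \<Rightarrow>
   ('r \<Rightarrow> 'q::ab_group_add \<Rightarrow> 'q) \<Rightarrow> ('q \<Rightarrow> 'r \<Rightarrow> 'q) \<Rightarrow> ('p \<Rightarrow> 'q \<Rightarrow> 'r) \<Rightarrow>
   ('p \<Rightarrow> 'b::ring) \<Rightarrow> ('q \<Rightarrow> 'b) \<Rightarrow> ('r \<Rightarrow> 'b) \<Rightarrow> bool" where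
  "toeplitz_rep _ lP rP lQ rQ psi \<iota>P \<iota>Q \<iota>R \<longleftrightarrow>
     graded_covariant_rep lP rP lQ rQ psi \<iota>P \<iota>Q \<iota>R (toeplitz_grading \<iota>P \<iota>Q \<iota>R) \<and>
     (\<forall>(S :: 'p \<Rightarrow> 'c) T \<sigma> Bg. graded_covariant_rep lP rP lQ rQ psi S T \<sigma> Bg \<longrightarrow>
        (\<exists>!\<eta>. graded_ring_epi \<eta> (toeplitz_grading \<iota>P \<iota>Q \<iota>R) Bg \<and>
              \<eta> \<circ> \<iota>P = S \<and> \<eta> \<circ> \<iota>Q = T \<and> \<eta> \<circ> \<iota>R = \<sigma>))"

end

theory Submission
  imports Defs
begin

definition subgrp :: "'a::ab_group_add set \<Rightarrow> bool" where
  "subgrp Z \<longleftrightarrow> 0\<in>Z \<and> (\<forall>x\<in>Z. \<forall>y\<in>Z. x+y\<in>Z) \<and> (\<forall>x\<in>Z. -x\<in>Z)"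

lemma add_span_subgrp: "subgrp (add_span X)"
  unfolding subgrp_def by (auto intro: add_span.intros)

lemma add_span_sub: assumes "subgrp Z" "X \<subseteq> Z" shows "add_span X \<subseteq> Z"
proof
  fix x assume "x \<in> add_span X" then show "x \<in> Z"
    by induction (use assms in \<open>auto simp: subgrp_def\<close>)
qed

lemma add_span_mult1:
  fixes Z :: "'a::ring set"
  assumes "subgrp Z" "\<And>y. y\<in>Y \<Longrightarrow> x*y\<in>Z" and "y \<in> add_span Y" shows "x*y\<in>Z"
  using assms(3) by (induction rule: add_span.induct)
    (use assms(1,2) in \<open>auto simp: subgrp_def distrib_left\<close>)

lemma add_span_mult:
  fixes X Y Z :: "'a::ring set"
  assumes "subgrp Z" "\<And>x y. x\<in>X \<Longrightarrow> y\<in>Y \<Longrightarrow> x*y \<in> Z"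
    and "x \<in> add_span X" "y \<in> add_span Y" shows "x*y \<in> Z"
  using assms(3)
proof (induction rule: add_span.induct)
  case (add_span_base x)
  show ?case by (rule add_span_mult1[OF assms(1) _ assms(4)]) (rule assms(2)[OF add_span_base])
qed (use assms(1) in \<open>auto simp: subgrp_def distrib_right\<close>)

lemma nprodsp_0: "\<not> nprodsp X 0 a"
  by (auto elim: nprodsp.cases)

lemma nprods_1: "nprods X 1 = X"
proof -
  have "nprodsp X 1 x \<longleftrightarrow> x \<in> X" for x
    using nprods_one[of x X] by (auto elim: nprodsp.cases simp: nprodsp_0)
  then show ?thesis by (auto simp: nprods_def)
qed

lemma nprodsp_Suc_cases: "nprodsp X (Suc n) b \<Longrightarrow> n \<ge> 1 \<Longrightarrow> \<exists>a x. nprodsp X n a \<and> x\<in>X \<and> b = a*x"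
  by (erule nprodsp.cases) auto

lemma set_power_1: "set_power X 1 = add_span X"
  unfolding set_power_def nprods_1 ..

lemma R1: "p \<in> set_power X a \<Longrightarrow> x\<in>X \<Longrightarrow> p*x \<in> set_power X (Suc a)"
  unfolding set_power_def
  by (rule add_span_mult[OF add_span_subgrp, of "nprods X a" X])
     (auto simp: nprods_def intro: nprods_step add_span.intros)

lemma R2:
  assumes "subgrp Z" "a \<ge> 1" "\<And>p x. p\<in>set_power X a \<Longrightarrow> x\<in>X \<Longrightarrow> p*x\<in>Z"
  shows "set_power X (Suc a) \<subseteq> Z"
  unfolding set_power_def
proof (rule add_span_sub[OF assms(1)])
  show "nprods X (Suc a) \<subseteq> Z"
  proof
    fix b assume "b \<in> nprods X (Suc a)"
    then obtain a' x where "nprodsp X a a'" "x\<in>X" "b = a'*x"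
      using nprodsp_Suc_cases assms(2) by (fastforce simp: nprods_def)
    moreover have "a' \<in> set_power X a"
      using \<open>nprodsp X a a'\<close> by (auto simp: set_power_def nprods_def intro: add_span.intros)
    ultimately show "b \<in> Z" using assms(3) by blast
  qed
qed

lemma zg_sub: "Z_graded A \<Longrightarrow> subgrp (A i)"
  unfolding Z_graded_def subgrp_def by blast

lemma zg_mul: "Z_graded A \<Longrightarrow> x\<in>A i \<Longrightarrow> y\<in>A j \<Longrightarrow> x*y\<in>A(i+j)"
  unfolding Z_graded_def by blast

lemma P1: "Z_graded A \<Longrightarrow> set_power (A e) 1 = A e"
  unfolding set_power_1 by (rule subset_antisym[OF add_span_sub[OF zg_sub]]) (auto intro: add_span.intros)

lemma pre_subgrp:
  fixes Z :: "'a::ring set"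
  shows "subgrp Z \<Longrightarrow> subgrp {p. p*y \<in> Z}"
  by (auto simp: subgrp_def distrib_right)

lemma L1:
  assumes A: "Z_graded A" and "a\<ge>1" "p\<in>set_power (A e) a" "z \<in> A 0"
  shows "p*z \<in> set_power (A e) a"
proof (cases "a = 1")
  case True
  then have "p \<in> A e" using assms P1 by auto
  then have "p*z \<in> A e" using zg_mul[OF A _ assms(4)] by fastforce
  then show ?thesis using True P1[OF A] by auto
next
  case False
  then obtain b where b: "a = Suc b" "b \<ge> 1" using assms(2) by (cases a) auto
  have "set_power (A e) (Suc b) \<subseteq> {p. p*z \<in> set_power (A e) (Suc b)}"
  proof (rule R2[OF pre_subgrp[OF add_span_subgrp[of "nprods (A e) (Suc b)"], folded set_power_def] b(2)])
    fix p' x assume "p' \<in> set_power (A e) b" "x \<in> A e"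
    moreover have "x*z \<in> A e" using zg_mul[OF A \<open>x \<in> A e\<close> assms(4)] by simp
    ultimately show "p' * x \<in> {p. p * z \<in> set_power (A e) (Suc b)}"
      using R1 by (simp add: mult.assoc)
  qed
  then show ?thesis using assms(3) b by auto
qed

lemma L3a:
  assumes A: "Z_graded A" and "p\<in>set_power (A e) 1" "y\<in>A(-e)"
  shows "p*y \<in> A 0"
proof -
  have "p \<in> A e" using assms(2) P1[OF A] by simp
  from zg_mul[OF A this assms(3)] show ?thesis by simp
qed

lemma L3b:
  assumes A: "Z_graded A" and "a\<ge>1" "p \<in> set_power (A e) (Suc a)" "y \<in> A(-e)"
  shows "p*y \<in> set_power (A e) a"
proof -
  have "set_power (A e) (Suc a) \<subseteq> {p. p*y \<in> set_power (A e) a}"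
  proof (rule R2[OF pre_subgrp[OF add_span_subgrp[of "nprods (A e) a"], folded set_power_def] assms(2)])
    fix p' x assume "p' \<in> set_power (A e) a" "x \<in> A e"
    moreover have "x*y \<in> A 0" using zg_mul[OF A \<open>x \<in> A e\<close> assms(4)] by simp
    ultimately show "p' * x \<in> {p. p * y \<in> set_power (A e) a}"
      using L1[OF A assms(2)] by (simp add: mult.assoc)
  qed
  then show ?thesis using assms(3) by auto
qed

lemma nprods_in_A: "nprodsp X n b \<Longrightarrow> X = A e \<Longrightarrow> Z_graded A \<Longrightarrow> b \<in> A (e * int n)"
proof (induction rule: nprodsp.induct)
  case (nprods_one x) then show ?case by simp
next
  case (nprods_step n a x)
  have "a*x \<in> A (e * int n + e)" using zg_mul[OF nprods_step(5)] nprods_step by simp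
  moreover have "e * int n + e = e * int (Suc n)" by (simp add: algebra_simps)
  ultimately show ?case by simp
qed

lemma P_sub_A: "Z_graded A \<Longrightarrow> set_power (A e) a \<subseteq> A (e * int a)"
  unfolding set_power_def
  by (rule add_span_sub[OF zg_sub]) (auto simp: nprods_def intro: nprods_in_A)

definition Gr :: "(int \<Rightarrow> 'a::ring set) \<Rightarrow> int \<Rightarrow> 'a set" where
  "Gr A i = (if i = 0 then A 0 else if i > 0 then set_power (A 1) (nat i) else set_power (A (-1)) (nat (-i)))"

lemma Gr_sub: "Z_graded A \<Longrightarrow> Gr A i \<subseteq> A i"
  using P_sub_A[of A 1 "nat i"] P_sub_A[of A "-1" "nat (-i)"] by (auto simp: Gr_def)

lemma Gr_subgrp: "Z_graded A \<Longrightarrow> subgrp (Gr A i)"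
  by (auto simp: Gr_def set_power_def add_span_subgrp zg_sub)

lemma Gr_base: "Z_graded A \<Longrightarrow> d \<in> {-1,0,1} \<Longrightarrow> A d \<subseteq> Gr A d"
  using P1[of A 1] P1[of A "-1"] by (auto simp: Gr_def)

lemma Gr_mul:
  assumes A: "Z_graded A" and x: "x \<in> Gr A i" and g: "g \<in> A d" and d: "d \<in> {-1,0,1}"
  shows "x*g \<in> Gr A (i+d)"
proof -
  consider "i = 0" | "i > 0" | "i < 0" by linarith
  then show ?thesis
  proof cases
    case 1
    then have "x \<in> A 0" using x by (simp add: Gr_def)
    then have "x*g \<in> A d" using zg_mul[OF A _ g] by fastforce
    then show ?thesis using Gr_base[OF A d] 1 by auto
  next
    case 2
    then obtain a where a: "i = int a" "a \<ge> 1" using pos_int_cases[OF 2] by (metis less_one linorder_not_le of_nat_0 of_nat_less_0_iff less_irrefl 2)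
    then have xp: "x \<in> set_power (A 1) a" using x by (simp add: Gr_def)
    consider "d = 0" | "d = 1" | "d = -1" using d by auto
    then show ?thesis
    proof cases
      case 1 then show ?thesis using L1[OF A a(2) xp] g a by (simp add: Gr_def)
    next
      case 2
      have "nat (int a + 1) = Suc a" by simp
      then show ?thesis using R1[OF xp, of g] g 2 a by (simp add: Gr_def)
    next
      case 3
      show ?thesis
      proof (cases "a = 1")
        case True then show ?thesis using L3a[OF A, of x 1 g] xp g 3 a by (simp add: Gr_def)
      next
        case False
        then obtain b where b: "a = Suc b" "b \<ge> 1" using a(2) by (cases a) auto
        have "nat (int (Suc b) + - 1) = b" by simp
        then show ?thesis using L3b[OF A b(2), of x 1 g] xp g 3 a b by (simp add: Gr_def)
      qed
    qed
  next
    case 3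
    then obtain a where a: "i = - int a" "a \<ge> 1"
      proof -
      have "-i > 0" using 3 by simp
      from pos_int_cases[OF this] obtain a where "-i = int a" "0 < a" by blast
      then show ?thesis using that[of a] by simp
    qed
    then have xp: "x \<in> set_power (A (-1)) a" using x by (simp add: Gr_def)
    consider "d = 0" | "d = -1" | "d = 1" using d by auto
    then show ?thesis
    proof cases
      case 1 then show ?thesis using L1[OF A a(2) xp] g a by (simp add: Gr_def)
    next
      case 2
      have "nat (1 + int a) = Suc a" by simp
      then show ?thesis using R1[OF xp, of g] g 2 a by (simp add: Gr_def)
    next
      case 3
      show ?thesis
      proof (cases "a = 1")
        case True then show ?thesis using L3a[OF A, of x "-1" g] xp g 3 a by (simp add: Gr_def)
      next
        case False
        then obtain b where b: "a = Suc b" "b \<ge> 1" using a(2) by (cases a) auto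
        have "nat (int (Suc b) - 1) = b" by simp
        then show ?thesis using L3b[OF A b(2), of x "-1" g] xp g 3 a b by (simp add: Gr_def)
      qed
    qed
  qed
qed


definition Wset :: "(int \<Rightarrow> 'a::ring set) \<Rightarrow> 'a set" where
  "Wset A = {x. \<exists>f F. finite F \<and> (\<forall>i. f i \<in> Gr A i) \<and> (\<forall>i. i\<notin>F \<longrightarrow> f i = 0) \<and> x = sum f F}"

lemma W_subgrp:
  assumes A: "Z_graded A" shows "subgrp (Wset A)"
  unfolding subgrp_def
proof (intro conjI ballI)
  show "0 \<in> Wset A" unfolding Wset_def
    by (rule CollectI, rule exI[of _ "\<lambda>i. 0"], rule exI[of _ "{}"])
       (use Gr_subgrp[OF A] in \<open>auto simp: subgrp_def\<close>)
next
  fix x assume "x \<in> Wset A"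
  then obtain f F where f: "finite F" "\<forall>i. f i \<in> Gr A i" "\<forall>i. i\<notin>F \<longrightarrow> f i = 0" "x = sum f F"
    unfolding Wset_def by blast
  show "-x \<in> Wset A" unfolding Wset_def
    by (rule CollectI, rule exI[of _ "\<lambda>i. - f i"], rule exI[of _ F])
       (use f Gr_subgrp[OF A] in \<open>auto simp: subgrp_def sum_negf\<close>)
next
  fix x y assume "x \<in> Wset A" "y \<in> Wset A"
  then obtain f F f' F' where f: "finite F" "\<forall>i. f i \<in> Gr A i" "\<forall>i. i\<notin>F \<longrightarrow> f i = 0" "x = sum f F"
    and f': "finite F'" "\<forall>i. f' i \<in> Gr A i" "\<forall>i. i\<notin>F' \<longrightarrow> f' i = 0" "y = sum f' F'"
    unfolding Wset_def by blast
  have "sum f (F \<union> F') = sum f F" by (rule sum.mono_neutral_right) (use f f' in auto)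
  moreover have "sum f' (F \<union> F') = sum f' F'" by (rule sum.mono_neutral_right) (use f f' in auto)
  ultimately have "x + y = sum (\<lambda>i. f i + f' i) (F \<union> F')" using f f' by (simp add: sum.distrib)
  then show "x + y \<in> Wset A" unfolding Wset_def
    by (intro CollectI exI[of _ "\<lambda>i. f i + f' i"] exI[of _ "F \<union> F'"])
       (use f f' Gr_subgrp[OF A] in \<open>auto simp: subgrp_def\<close>)
qed

lemma W_mul:
  assumes A: "Z_graded A" and x: "x \<in> Wset A" and g: "g \<in> A d" and d: "d \<in> {-1,0,1}"
  shows "x*g \<in> Wset A"
proof -
  obtain f F where f: "finite F" "\<forall>i. f i \<in> Gr A i" "\<forall>i. i\<notin>F \<longrightarrow> f i = 0" "x = sum f F"
    using x unfolding Wset_def by blast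
  define h where "h i = f (i - d) * g" for i
  have "sum h ((\<lambda>i. i + d) ` F) = sum (h \<circ> (\<lambda>i. i + d)) F"
    by (rule sum.reindex) (auto simp: inj_on_def)
  also have "\<dots> = x * g" using f by (simp add: h_def sum_distrib_right o_def)
  finally have e: "x*g = sum h ((\<lambda>i. i + d) ` F)" ..
  have hG: "h i \<in> Gr A i" for i using Gr_mul[OF A _ g d, of "f (i - d)" "i - d"] f(2) by (simp add: h_def)
  have h0: "i \<notin> (\<lambda>i. i + d) ` F \<longrightarrow> h i = 0" for i
  proof
    assume "i \<notin> (\<lambda>i. i + d) ` F"
    then have "i - d \<notin> F" by force
    then show "h i = 0" using f(3) by (simp add: h_def)
  qed
  show ?thesis unfolding Wset_def
    by (intro CollectI exI[of _ h] exI[of _ "(\<lambda>i. i + d) ` F"]) (use e hG h0 f(1) in auto)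
qed

lemma W_base:
  assumes A: "Z_graded A" and "x \<in> A d" "d \<in> {-1,0,1}" shows "x \<in> Wset A"
  unfolding Wset_def
  by (intro CollectI exI[of _ "\<lambda>i. if i = d then x else 0"] exI[of _ "{d}"])
     (use assms Gr_base[OF A] Gr_subgrp[OF A] in \<open>auto simp: subgrp_def\<close>)

lemma W_extract:
  assumes A: "Z_graded A" and x: "x \<in> Wset A" and xk: "x \<in> A k"
  shows "x \<in> Gr A k"
proof -
  obtain f F where f: "finite F" "\<forall>i. f i \<in> Gr A i" "\<forall>i. i\<notin>F \<longrightarrow> f i = 0" "x = sum f F"
    using x unfolding Wset_def by blast
  define g where "g i = f i - (if i = k then x else 0)" for i
  have supp: "{i. g i \<noteq> 0} \<subseteq> insert k F" using f(3) by (auto simp: g_def)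
  have fin: "finite {i. g i \<noteq> 0}" using finite_subset[OF supp] f(1) by blast
  have gA: "g i \<in> A i" for i
  proof -
    have "f i \<in> A i" using f(2) Gr_sub[OF A] by blast
    moreover have "(if i = k then x else 0) \<in> A i" using xk zg_sub[OF A, of i] by (auto simp: subgrp_def)
    ultimately show ?thesis using zg_sub[OF A, of i] unfolding g_def subgrp_def
      by (metis diff_conv_add_uminus)
  qed
  have "sum g {i. g i \<noteq> 0} = sum g (insert k F)"
    by (rule sum.mono_neutral_left) (use supp f(1) in auto)
  also have "\<dots> = sum f (insert k F) - x"
    by (simp add: g_def sum_subtractf f(1))
  also have "sum f (insert k F) = sum f F"
    using f(1,3) by (cases "k \<in> F") (auto simp: insert_absorb)
  finally have "sum g {i. g i \<noteq> 0} = 0" using f(4) by simp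
  then have "\<forall>i. g i = 0" using A fin gA unfolding Z_graded_def by blast
  then have "f k = x" by (auto simp: g_def dest: spec[of _ k])
  then show ?thesis using f(2) by metis
qed

lemma nprodsp_mult: "nprodsp X m b \<Longrightarrow> nprodsp X n a \<Longrightarrow> nprodsp X (n+m) (a*b)"
proof (induction arbitrary: rule: nprodsp.induct)
  case (nprods_one x) then show ?case using nprods_step by fastforce
next
  case (nprods_step m b x)
  then have "nprodsp X (Suc (n+m)) (a*b*x)" by (simp add: nprodsp.nprods_step)
  then show ?case by (simp add: mult.assoc)
qed

lemma ring_span_words: "ring_span X \<subseteq> add_span {a. \<exists>n. nprodsp X n a}"
proof
  fix x assume "x \<in> ring_span X" then show "x \<in> add_span {a. \<exists>n. nprodsp X n a}"
  proof induction
    case (ring_span_base x) then show ?case by (blast intro: add_span.intros nprods_one)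
  next
    case (ring_span_mult x y)
    show ?case by (rule add_span_mult[OF add_span_subgrp _ ring_span_mult.IH])
       (blast intro: add_span.intros nprodsp_mult)
  qed (auto intro: add_span.intros)
qed

lemma words_in_W: "nprodsp X n a \<Longrightarrow> X = A 0 \<union> A 1 \<union> A (-1) \<Longrightarrow> Z_graded A \<Longrightarrow> a \<in> Wset A"
proof (induction rule: nprodsp.induct)
  case (nprods_one x) then show ?case using W_base[of A x] by auto
next
  case (nprods_step n a x) then show ?case using W_mul[of A a x] by auto
qed

lemma ring_span_mono: "X \<subseteq> Y \<Longrightarrow> ring_span X \<subseteq> ring_span Y"
proof
  fix x assume XY: "X \<subseteq> Y" and xs: "x \<in> ring_span X" from xs show "x \<in> ring_span Y"
    by (induction rule: ring_span.induct) (use XY in \<open>auto intro: ring_span.intros\<close>)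
qed

lemma gen_ss:
  assumes A: "Z_graded A" and gen: "ring_span (A 0 \<union> A 1 \<union> A (-1)) = UNIV"
  shows "semi_saturated A"
proof -
  have "add_span {a. \<exists>n. nprodsp (A 0 \<union> A 1 \<union> A (-1)) n a} \<subseteq> Wset A"
    by (rule add_span_sub[OF W_subgrp[OF A]]) (use words_in_W A in blast)
  then have W: "x \<in> Wset A" for x using ring_span_words[of "A 0 \<union> A 1 \<union> A (-1)"] gen by blast
  have "A (int n) = set_power (A 1) n \<and> A (- int n) = set_power (A (-1)) n" if "n > 0" for n
  proof
    show "A (int n) = set_power (A 1) n"
    proof
      show "A (int n) \<subseteq> set_power (A 1) n"
        using W_extract[OF A W, of _ "int n"] that by (auto simp: Gr_def)
      show "set_power (A 1) n \<subseteq> A (int n)" using P_sub_A[OF A, of 1 n] by simp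
    qed
    show "A (- int n) = set_power (A (-1)) n"
    proof
      show "A (- int n) \<subseteq> set_power (A (-1)) n"
        using W_extract[OF A W, of _ "- int n"] that by (auto simp: Gr_def)
      show "set_power (A (-1)) n \<subseteq> A (- int n)" using P_sub_A[OF A, of "-1" n] by simp
    qed
  qed
  then show ?thesis using A by (simp add: semi_saturated_def)
qed

lemma gcr_ss:
  assumes "graded_covariant_rep lP rP lQ rQ psi S T \<sigma> Bg"
  shows "semi_saturated Bg"
proof -
  have A: "Z_graded Bg" and g: "ring_span (range \<sigma> \<union> range S \<union> range T) = UNIV"
    and sub: "range \<sigma> \<subseteq> Bg 0" "range T \<subseteq> Bg 1" "range S \<subseteq> Bg (-1)"
    using assms unfolding graded_covariant_rep_def by auto
  have "ring_span (range \<sigma> \<union> range S \<union> range T) \<subseteq> ring_span (Bg 0 \<union> Bg 1 \<union> Bg (-1))"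
    by (rule ring_span_mono) (use sub in auto)
  then show ?thesis using gen_ss[OF A] g by auto
qed

theorem mainTheorem12:
  fixes lP :: "'r::ring \<Rightarrow> 'p::ab_group_add \<Rightarrow> 'p" and rP :: "'p \<Rightarrow> 'r \<Rightarrow> 'p"
    and lQ :: "'r \<Rightarrow> 'q::ab_group_add \<Rightarrow> 'q" and rQ :: "'q \<Rightarrow> 'r \<Rightarrow> 'q"
    and psi :: "'p \<Rightarrow> 'q \<Rightarrow> 'r"
    and \<iota>P :: "'p \<Rightarrow> 't::ring" and \<iota>Q :: "'q \<Rightarrow> 't" and \<iota>R :: "'r \<Rightarrow> 't"
    and S :: "'p \<Rightarrow> 'b::ring" and T :: "'q \<Rightarrow> 'b" and \<sigma> :: "'r \<Rightarrow> 'b"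
    and Bg :: "int \<Rightarrow> 'b set"
  assumes "R_system lP rP lQ rQ psi"
  shows "(toeplitz_rep TYPE('c::ring) lP rP lQ rQ psi \<iota>P \<iota>Q \<iota>R
            \<longrightarrow> semi_saturated (toeplitz_grading \<iota>P \<iota>Q \<iota>R))
       \<and> (graded_covariant_rep lP rP lQ rQ psi S T \<sigma> Bg \<longrightarrow> semi_saturated Bg)"
  using gcr_ss[of lP rP lQ rQ psi \<iota>P \<iota>Q \<iota>R "toeplitz_grading \<iota>P \<iota>Q \<iota>R"]
    gcr_ss[of lP rP lQ rQ psi S T \<sigma> Bg] unfolding toeplitz_rep_def by blast

end
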